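(* Let $k>l\ge 0$ be integers. For an integer $n\ge 1$ let $C_n:\{0,\dots,2^{2n}-1\}\to\{0,\dots,2^n-1\}^2$ denote the Z curve (Z-order) of order $n$, and for a sequence $t=(t_0,\dots,t_{2^{2n}-1})$ let $I_n(t)$ be the $2^n\times 2^n$ image $I_n(t)(i,j)=t_{C_n^{-1}(i,j)}$; $I_n^{-1}$ denotes the inverse map sending a $2^n\times 2^n$ image back to a sequence of length $2^{2n}$. Let $W_l$ be a $2^l\times 2^l$ array of real numbers (a convolution kernel), and for a $2^k\times 2^k$ image $I$ define the stride-$2^l$ convolution output, a $2^{k-l}\times 2^{k-l}$ image, $$O_l(I)(i,j)=\sum_{m,n\in\{0,\dots,2^l-1\}} I(i2^l+m,\,j2^l+n)\,W_l(m,n),\qquad i,j\in\{0,\dots,2^{k-l}-1\}.$$ Let $s=(s_0,\dots,s_{2^{2k}-1})$ be a sequence of real numbers, let $d\in\mathbb{N}$, $r=d\,2^{2l}$, and let $s^r$ be the circular shift $s^r(i)=s\big((i+r)\bmod 2^{2k}\big)$. Then $I_{k-l}^{-1}\circ O_l\circ I_k(s^r)$ is equal to $I_{k-l}^{-1}\circ O_l\circ I_k(s)$ up to a (circular) shift of $d$ units, i.e. for every $u\in\{0,\dots,2^{2(k-l)}-1\}$, $$\big(I_{k-l}^{-1}\circ O_l\circ I_k(s^r)\big)(u)=\big(I_{k-l}^{-1}\circ O_l\circ I_k(s)\big)\big((u+d)\bmod 2^{2(k-l)}\big).$$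
   Context: Z curve of order $n$: write an index $z\in\{0,\dots,2^{2n}-1\}$ in binary as $z=z_{2n-1}z_{2n-2}\dots z_1z_0$ ($z_i\in\{0,1\}$). Then $C_n(z)=(x,y)$ where $x$ has binary expansion $z_{2n-1}z_{2n-3}\dots z_1$ and $y$ has binary expansion $z_{2n-2}z_{2n-4}\dots z_0$ (bit interleaving). $C_n$ is a bijection from $\{0,\dots,2^{2n}-1\}$ onto $\{0,\dots,2^n-1\}^2$, so $I_n$ is a bijection between sequences of length $2^{2n}$ and $2^n\times 2^n$ images. *)

theory Defs
  imports Complex_Main
begin

text \<open>Z curve of order n: bit de-interleaving. x collects the odd-position bits
 z_1, z_3, ..., y collects the even-position bits z_0, z_2, ...\<close>
definition zcurve :: "nat \<Rightarrow> nat \<Rightarrow> nat \<times> nat" where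
  "zcurve n z = ((\<Sum>i<n. ((z div 2 ^ (2 * i + 1)) mod 2) * 2 ^ i),
                 (\<Sum>i<n. ((z div 2 ^ (2 * i)) mod 2) * 2 ^ i))"

text \<open>Sequences are functions nat \<Rightarrow> real (only indices < 2^(2n) matter);
 images are functions nat \<Rightarrow> nat \<Rightarrow> real (only indices < 2^n matter).\<close>

definition img :: "nat \<Rightarrow> (nat \<Rightarrow> real) \<Rightarrow> nat \<Rightarrow> nat \<Rightarrow> real" where
  "img n t i j = t (the_inv_into {..<2 ^ (2 * n)} (zcurve n) (i, j))"

definition img_inv :: "nat \<Rightarrow> (nat \<Rightarrow> nat \<Rightarrow> real) \<Rightarrow> nat \<Rightarrow> real" where
  "img_inv n I u = I (fst (zcurve n u)) (snd (zcurve n u))"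

definition conv_out :: "nat \<Rightarrow> (nat \<Rightarrow> nat \<Rightarrow> real) \<Rightarrow> (nat \<Rightarrow> nat \<Rightarrow> real) \<Rightarrow> nat \<Rightarrow> nat \<Rightarrow> real" where
  "conv_out l W I i j = (\<Sum>m<2 ^ l. \<Sum>n<2 ^ l. I (i * 2 ^ l + m) (j * 2 ^ l + n) * W m n)"

end

theory Submission
  imports Defs
begin

lemma zc_suc:
  "zcurve (Suc n) z = (z mod 4 div 2 + 2 * fst (zcurve n (z div 4)),
                       z mod 2 + 2 * snd (zcurve n (z div 4)))"
proof -
  have a: "(z div 2 ^ (2 * Suc i + 1)) mod 2 * 2 ^ Suc i
        = 2 * (((z div 4) div 2 ^ (2 * i + 1)) mod 2 * 2 ^ i)" for i
  proof -
    have e: "(2::nat) ^ (2 * Suc i + 1) = 4 * 2 ^ (2 * i + 1)" by simp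
    have "z div 2 ^ (2 * Suc i + 1) = (z div 4) div 2 ^ (2 * i + 1)"
      unfolding e by (rule div_mult2_eq)
    then show ?thesis by simp
  qed
  have b: "(z div 2 ^ (2 * Suc i)) mod 2 * 2 ^ Suc i
        = 2 * (((z div 4) div 2 ^ (2 * i)) mod 2 * 2 ^ i)" for i
  proof -
    have e: "(2::nat) ^ (2 * Suc i) = 4 * 2 ^ (2 * i)" by simp
    have "z div 2 ^ (2 * Suc i) = (z div 4) div 2 ^ (2 * i)"
      unfolding e by (rule div_mult2_eq)
    then show ?thesis by simp
  qed
  have c: "z div 2 mod 2 = z mod 4 div 2"
  proof -
    have "z mod 4 = 2*(z div 2 mod 2) + z mod 2" using mod_mult2_eq[of z 2 2] by simp
    then show ?thesis by simp
  qed
  show ?thesis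
    unfolding zcurve_def prod.sel
    unfolding sum.lessThan_Suc_shift a b sum_distrib_left[symmetric]
    using c by simp
qed


lemma zc_zero: "zcurve 0 z = (0,0)" by (simp add: zcurve_def)

lemma zc_bound: "fst (zcurve n z) < 2^n \<and> snd (zcurve n z) < 2^n"
proof (induction n arbitrary: z)
  case 0 then show ?case by (simp add: zc_zero)
next
  case (Suc n)
  have f: "fst (zcurve n (z div 4)) < 2^n" "snd (zcurve n (z div 4)) < 2^n" using Suc by auto
  have "z mod 4 div 2 \<le> 1" by simp
  moreover have "z mod 2 \<le> 1" by simp
  ultimately show ?case using f unfolding zc_suc by simp
qed

lemma zc_inj: "inj_on (zcurve n) {..<2^(2*n)}"
proof (induction n)
  case 0 then show ?case by (simp add: inj_on_def)
next
  case (Suc n)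
  show ?case
  proof (rule inj_onI)
    fix z z' assume z: "z \<in> {..<2^(2*Suc n)}" and z': "z' \<in> {..<2^(2*Suc n)}"
      and eq: "zcurve (Suc n) z = zcurve (Suc n) z'"
    define A where "A = zcurve n (z div 4)"
    define A' where "A' = zcurve n (z' div 4)"
    have e1: "z mod 4 div 2 + 2 * fst A = z' mod 4 div 2 + 2 * fst A'"
      and e2: "z mod 2 + 2 * snd A = z' mod 2 + 2 * snd A'"
      using eq unfolding zc_suc A_def A'_def by auto
    have b1: "z mod 4 div 2 = z' mod 4 div 2"
    proof -
      have "(z mod 4 div 2 + 2 * fst A) mod 2 = (z' mod 4 div 2 + 2 * fst A') mod 2" using e1 by simp
      moreover have "z mod 4 div 2 < 2" "z' mod 4 div 2 < 2" by auto
      ultimately show ?thesis by simp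
    qed
    have b2: "z mod 2 = z' mod 2"
    proof -
      have "(z mod 2 + 2 * snd A) mod 2 = (z' mod 2 + 2 * snd A') mod 2" using e2 by simp
      then show ?thesis by simp
    qed
    have m4: "z mod 4 = z' mod 4"
    proof -
      have "z mod 4 = 2*(z div 2 mod 2) + z mod 2" using mod_mult2_eq[of z 2 2] by simp
      moreover have "z' mod 4 = 2*(z' div 2 mod 2) + z' mod 2" using mod_mult2_eq[of z' 2 2] by simp
      ultimately show ?thesis using b1 b2 by simp
    qed
    have "A = A'" using e1 e2 b1 b2 by (simp add: prod_eq_iff)
    moreover have "z div 4 < 2^(2*n)" "z' div 4 < 2^(2*n)" using z z' by (auto simp: less_mult_imp_div_less)
    ultimately have "z div 4 = z' div 4" using Suc.IH unfolding A_def A'_def inj_on_def by auto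
    then show "z = z'" using m4 by (metis div_mult_mod_eq)
  qed
qed

lemma zc_split:
  "c < 2^(2*b) \<Longrightarrow> zcurve (a+b) (x*2^(2*b)+c) =
     (fst (zcurve a x) * 2^b + fst (zcurve b c), snd (zcurve a x) * 2^b + snd (zcurve b c))"
proof (induction b arbitrary: c)
  case 0 then show ?case by (simp add: zc_zero)
next
  case (Suc b)
  have e: "(2::nat)^(2*Suc b) = 4 * 2^(2*b)" by simp
  have d: "(x*2^(2*Suc b)+c) div 4 = x*2^(2*b) + c div 4" unfolding e by simp
  have r: "x*2^(2*Suc b)+c = c + 4*(x*2^(2*b))" unfolding e by simp
  have r2: "x*2^(2*Suc b)+c = c + 2*(2*(x*2^(2*b)))" unfolding e by simp
  have m: "(x*2^(2*Suc b)+c) mod 4 = c mod 4" unfolding r by (rule mod_mult_self2)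
  have m2: "(x*2^(2*Suc b)+c) mod 2 = c mod 2" unfolding r2 by (rule mod_mult_self2)
  have c4: "c div 4 < 2^(2*b)" using Suc.prems unfolding e by (simp add: less_mult_imp_div_less mult.commute)
  show ?case
    unfolding add_Suc_right zc_suc d m m2 Suc.IH[OF c4] by (simp add: algebra_simps)
qed

lemma zc_surj: "zcurve n ` {..<2^(2*n)} = {..<2^n} \<times> {..<2^n}"
proof (rule card_subset_eq)
  show "finite ({..<(2::nat)^n} \<times> {..<(2::nat)^n})" by simp
  show "zcurve n ` {..<2^(2*n)} \<subseteq> {..<2^n} \<times> {..<2^n}"
    by (simp add: image_subset_iff mem_Times_iff zc_bound)
  show "card (zcurve n ` {..<2^(2*n)}) = card ({..<(2::nat)^n} \<times> {..<(2::nat)^n})"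
  proof -
    have "card ({..<(2::nat)^n} \<times> {..<(2::nat)^n}) = 2^n * 2^n" by (simp add: card_cartesian_product)
    also have "\<dots> = 2^(2*n)" by (simp add: mult_2 power_add)
    finally show ?thesis using card_image[OF zc_inj[of n]] by simp
  qed
qed

lemma img_zc: "z < 2^(2*n) \<Longrightarrow> img n t (fst (zcurve n z)) (snd (zcurve n z)) = t z"
  by (simp add: img_def the_inv_into_f_f zc_inj)

lemma modlem: "(c::nat) < B \<Longrightarrow> (q*B + c) mod (A*B) = (q mod A)*B + c"
  using mod_mult2_eq[of "q*B+c" B A] by (simp add: mult.commute)

theorem lemma1:
  fixes k l d u :: nat and s :: "nat \<Rightarrow> real" and W :: "nat \<Rightarrow> nat \<Rightarrow> real"
  assumes "l < k" and "u < 2 ^ (2 * (k - l))"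
  shows "img_inv (k - l) (conv_out l W (img k (\<lambda>i. s ((i + d * 2 ^ (2 * l)) mod 2 ^ (2 * k))))) u
       = img_inv (k - l) (conv_out l W (img k s)) ((u + d) mod 2 ^ (2 * (k - l)))"
proof -
  define N where "N = k - l"
  have kN: "k = N + l" using assms(1) unfolding N_def by simp
  define u' where "u' = (u + d) mod 2 ^ (2 * N)"
  have u': "u' < 2^(2*N)" unfolding u'_def by simp
  have u: "u < 2^(2*N)" using assms(2) unfolding N_def .
  define B :: nat where "B = 2^(2*l)"
  have K: "(2::nat)^(2*k) = 2^(2*N) * B" unfolding kN B_def by (simp add: power_add)
  have bnd: "v*B + c < 2^(2*k)" if "v < 2^(2*N)" "c < B" for v c
  proof -
    have "v*B + c < (v+1)*B" using that by simp
    also have "\<dots> \<le> 2^(2*N)*B" using that(1) by (intro mult_right_mono) auto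
    finally show ?thesis unfolding K .
  qed
  have key: "img k (\<lambda>i. s ((i + d * B) mod 2 ^ (2 * k))) (fst (zcurve N u) * 2 ^ l + m) (snd (zcurve N u) * 2 ^ l + n)
      = img k s (fst (zcurve N u') * 2 ^ l + m) (snd (zcurve N u') * 2 ^ l + n)"
    if mn: "m < 2^l" "n < 2^l" for m n
  proof -
    have "(m, n) \<in> zcurve l ` {..<2^(2*l)}" using mn zc_surj[of l] by auto
    then obtain c where c: "c < B" and cz: "zcurve l c = (m, n)" unfolding B_def by auto
    have z1: "zcurve k (u*B + c) = (fst (zcurve N u) * 2 ^ l + m, snd (zcurve N u) * 2 ^ l + n)"
      unfolding kN B_def using zc_split[of c l N u] c cz unfolding B_def by simp
    have z2: "zcurve k (u'*B + c) = (fst (zcurve N u') * 2 ^ l + m, snd (zcurve N u') * 2 ^ l + n)"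
      unfolding kN B_def using zc_split[of c l N u'] c cz unfolding B_def by simp
    have "img k (\<lambda>i. s ((i + d * B) mod 2 ^ (2 * k))) (fst (zcurve N u) * 2 ^ l + m) (snd (zcurve N u) * 2 ^ l + n)
        = s ((u*B + c + d * B) mod 2 ^ (2 * k))"
      using img_zc[OF bnd[OF u c]] z1 by simp
    also have "(u*B + c + d * B) mod 2 ^ (2 * k) = u'*B + c"
      unfolding K u'_def using modlem[OF c, of "u+d" "2^(2*N)"] by (simp add: algebra_simps)
    also have "s (u'*B + c) = img k s (fst (zcurve N u') * 2 ^ l + m) (snd (zcurve N u') * 2 ^ l + n)"
      using img_zc[OF bnd[OF u' c]] z2 by simp
    finally show ?thesis .
  qed
  show ?thesis
    unfolding N_def[symmetric] u'_def[symmetric] B_def[symmetric] img_inv_def conv_out_def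
    apply (rule sum.cong[OF refl])
    apply (rule sum.cong[OF refl])
    by (simp only: key lessThan_iff)
qed

end
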